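(* Let $G$ be a connected graph with $n\ge 2$ vertices. Then $$EE(G) > e^{2\cos\left(\frac{\pi}{n+1}\right)} + (n-1) - 2\cos\left(\frac{\pi}{n+1}\right).$$
   Context: All graphs are finite, simple and undirected. For a graph $G$ with adjacency matrix $A(G)$ having eigenvalues $\lambda_1\ge\cdots\ge\lambda_n$, the Estrada index is $EE(G)=\sum_{i=1}^n e^{\lambda_i}$. *)

theory Defs
  imports "Jordan_Normal_Form.Char_Poly"
begin

text \<open>A finite simple graph on the vertex set {0..<n}, given by an
  irreflexive symmetric adjacency relation E (values outside {0..<n} are irrelevant).\<close>
definition simple_graph :: "nat \<Rightarrow> (nat \<Rightarrow> nat \<Rightarrow> bool) \<Rightarrow> bool" where
  "simple_graph n E \<longleftrightarrow> (\<forall>i<n. \<forall>j<n. E i j \<longrightarrow> E j i) \<and> (\<forall>i<n. \<not> E i i)"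

definition graph_edges :: "nat \<Rightarrow> (nat \<Rightarrow> nat \<Rightarrow> bool) \<Rightarrow> (nat \<times> nat) set" where
  "graph_edges n E = {(i, j). i < n \<and> j < n \<and> E i j}"

definition connected_graph :: "nat \<Rightarrow> (nat \<Rightarrow> nat \<Rightarrow> bool) \<Rightarrow> bool" where
  "connected_graph n E \<longleftrightarrow> (\<forall>i<n. \<forall>j<n. (i, j) \<in> (graph_edges n E)\<^sup>*)"

definition adjacency_matrix :: "nat \<Rightarrow> (nat \<Rightarrow> nat \<Rightarrow> bool) \<Rightarrow> real mat" where
  "adjacency_matrix n E = mat n n (\<lambda>(i, j). if E i j then 1 else 0)"

text \<open>Eigenvalues with multiplicity: the multiset of roots of the characteristic
  polynomial (the adjacency matrix is real symmetric, so all roots are real).\<close>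
definition eigenvalues_mset :: "real mat \<Rightarrow> real multiset" where
  "eigenvalues_mset A = proots (char_poly A)"

definition estrada_index :: "nat \<Rightarrow> (nat \<Rightarrow> nat \<Rightarrow> bool) \<Rightarrow> real" where
  "estrada_index n E = (\<Sum>\<^sub># (image_mset exp (eigenvalues_mset (adjacency_matrix n E))))"

end

theory Submission
  imports Defs "Jordan_Normal_Form.Schur_Decomposition"
begin


lemma exp_taylor5: "1 + y + y^2/2 + y^3/6 + y^4/24 + y^5/120 \<le> exp (y::real)"
proof -
  obtain t where "exp y = (\<Sum>m<6. (y ^ m) / fact m) + (exp t / fact 6) * y ^ 6"
    using Maclaurin_exp_le[of y 6] by blast
  moreover have "(exp t / fact 6) * y ^ 6 \<ge> 0" by (simp add: zero_le_even_power)
  moreover have "(\<Sum>m<6. (y ^ m) / fact m) = 1 + y + y^2/2 + y^3/6 + y^4/24 + y^5/120"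
    by (simp add: numeral_eq_Suc fact_numeral) 
  ultimately show ?thesis by linarith
qed

lemma exp_taylor3: "1 + y + y^2/2 + y^3/6 \<le> exp (y::real)"
proof -
  obtain t where "exp y = (\<Sum>m<4. (y ^ m) / fact m) + (exp t / fact 4) * y ^ 4"
    using Maclaurin_exp_le[of y 4] by blast
  moreover have "(exp t / fact 4) * y ^ 4 \<ge> 0" by (simp add: zero_le_even_power)
  moreover have "(\<Sum>m<4. (y ^ m) / fact m) = 1 + y + y^2/2 + y^3/6"
    by (simp add: numeral_eq_Suc fact_numeral) 
  ultimately show ?thesis by linarith
qed

lemma exp_upper:
  fixes x :: real
  assumes "0 < q" "q \<le> 1 + y + y^2/2 + y^3/6 + y^4/24 + y^5/120" "y = - x / 2"
  shows "exp x \<le> 1 / q^2"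
proof -
  have "q \<le> exp y" using exp_taylor5[of y] assms by linarith
  hence "q^2 \<le> exp y ^ 2" using assms by (simp add: power_mono)
  also have "exp y ^ 2 = exp (-x)" using assms by (simp add: power2_eq_square flip: exp_add)
  finally have "q^2 \<le> 1 / exp x" by (simp add: exp_minus field_simps)
  thus ?thesis using assms by (simp add: field_simps)
qed

lemma g_mono: "0 \<le> a \<Longrightarrow> a \<le> b \<Longrightarrow> exp a - a \<le> exp b - (b::real)"
proof -
  assume "0 \<le> a" "a \<le> b"
  have "exp (b - a) \<ge> 1 + (b - a)" using exp_ge_add_one_self by simp
  hence "exp a * exp (b - a) \<ge> exp a * (1 + (b - a))" by simp
  hence "exp b \<ge> exp a + exp a * (b - a)" by (simp add: algebra_simps flip: exp_add)
  moreover have "exp a * (b - a) \<ge> b - a" using \<open>0 \<le> a\<close> \<open>a \<le> b\<close>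
    by (simp add: mult_le_cancel_right1)
  ultimately show ?thesis by linarith
qed

lemma sqrt_lo: "0 \<le> a \<Longrightarrow> a^2 \<le> x \<Longrightarrow> a \<le> sqrt (x::real)"
  by (rule real_le_rsqrt)
lemma sqrt_hi: "0 \<le> b \<Longrightarrow> x \<le> b^2 \<Longrightarrow> sqrt x \<le> (b::real)"
  by (metis real_sqrt_le_mono real_sqrt_unique)

lemma num_bound:
  fixes n :: nat assumes "n \<ge> 2"
  shows "exp (2 * cos (pi / (real n + 1))) - 2 * cos (pi / (real n + 1)) < real n"
proof -
  define c where "c = 2 * cos (pi / (real n + 1))"
  have c0: "0 \<le> c" unfolding c_def using assms
    by (intro mult_nonneg_nonneg cos_ge_zero) (auto simp: field_simps)
  consider "n = 2" | "n = 3" | "n = 4 \<or> n = 5" | "n \<ge> 6" using assms by linarith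
  thus ?thesis
  proof cases
    case 1
    hence "c = 1" unfolding c_def using cos_60 by simp
    moreover have "exp (1::real) \<le> 1 / (0.6^2)"
      by (rule exp_upper[where y = "-1/2"]) (auto simp: power_divide)
    ultimately show ?thesis using 1 by (auto simp: c_def power2_eq_square)
  next
    case 2
    hence cq: "c = sqrt 2" unfolding c_def using cos_45 by simp
    have s: "sqrt 2 \<ge> 1.41" "sqrt 2 \<le> 1.42"
      by (rule sqrt_lo; simp add: power2_eq_square) (rule sqrt_hi; simp add: power2_eq_square)
    define y where "y = - sqrt 2 / 2"
    have y2: "y^2 = 1/2" by (simp add: y_def power_divide)
    have p: "1 + y + y^2/2 + y^3/6 + y^4/24 + y^5/120 = 1 + 1/4 + 1/96 + y * (1 + 1/12 + 1/480)"
    proof -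
      have e: "y^3 = y*(y^2)" "y^4 = (y^2)^2" "y^5 = y*(y^2)^2" by (simp_all add: eval_nat_numeral)
      show ?thesis unfolding e y2 by (simp add: algebra_simps power2_eq_square)
    qed
    define q where "q = (1 + 1/4 + 1/96 + y * (1 + 1/12 + 1/480) :: real)"
    have q: "q \<ge> 0.489" unfolding q_def y_def using s by simp
    have "exp (sqrt 2) \<le> 1 / q^2" by (rule exp_upper[where y = y]) (use q p in \<open>auto simp: q_def y_def\<close>)
    also have "\<dots> \<le> 1 / 0.489^2" using q by (intro divide_left_mono power_mono) auto
    finally show ?thesis using s 2 cq by (simp add: c_def power2_eq_square)
  next
    case 3
    have "c \<le> 2 * cos (pi / 6)" unfolding c_def using 3
      by (subst mult_le_cancel_left_pos, simp, subst cos_mono_le_eq) (auto simp: field_simps)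
    hence "c \<le> sqrt 3" by (simp add: cos_30)
    hence gc: "exp c - c \<le> exp (sqrt 3) - sqrt 3" by (rule g_mono[OF c0])
    have s: "sqrt 3 \<ge> 1.732" "sqrt 3 \<le> 1.7321"
      by (rule sqrt_lo; simp add: power2_eq_square) (rule sqrt_hi; simp add: power2_eq_square)
    define y where "y = - sqrt 3 / 2"
    have y2: "y^2 = 3/4" by (simp add: y_def power_divide)
    have p: "1 + y + y^2/2 + y^3/6 + y^4/24 + y^5/120 = 1 + 3/8 + 9/384 + y * (1 + 1/8 + 9/1920)"
    proof -
      have e: "y^3 = y*(y^2)" "y^4 = (y^2)^2" "y^5 = y*(y^2)^2" by (simp_all add: eval_nat_numeral)
      show ?thesis unfolding e y2 by (simp add: algebra_simps power2_eq_square)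
    qed
    define q where "q = (1 + 3/8 + 9/384 + y * (1 + 1/8 + 9/1920) :: real)"
    have q: "q \<ge> 0.42" unfolding q_def y_def using s by simp
    have "exp (sqrt 3) \<le> 1 / q^2" by (rule exp_upper[where y = y]) (use q p in \<open>auto simp: q_def y_def\<close>)
    also have "\<dots> \<le> 1 / 0.42^2" using q by (intro divide_left_mono power_mono) auto
    finally have "exp (sqrt 3) \<le> 1 / 0.42^2" .
    hence "exp c - c < 4" using gc s by (simp add: power2_eq_square)
    thus ?thesis using 3 by (auto simp: c_def)
  next
    case 4
    have "c \<le> 2" unfolding c_def by simp
    hence gc: "exp c - c \<le> exp 2 - 2" by (rule g_mono[OF c0])
    have "exp (2::real) \<le> 1 / (11/30)^2"
      by (rule exp_upper[where y = "-1"]) (auto simp: power_divide)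
    hence "exp c - c < 6" using gc by (simp add: power2_eq_square)
    thus ?thesis using 4 by (auto simp: c_def)
  qed
qed


lemma sym_real_eig:
  fixes A :: "real mat"
  assumes A: "A \<in> carrier_mat n n" and sym: "\<And>i j. i<n \<Longrightarrow> j<n \<Longrightarrow> A$$(i,j) = A$$(j,i)"
  and ev: "eigenvalue (map_mat complex_of_real A) z"
  shows "Im z = 0"
proof -
  let ?C = "map_mat complex_of_real A"
  have C: "?C \<in> carrier_mat n n" using A by simp
  from ev obtain v where "eigenvector ?C v z" unfolding eigenvalue_def by auto
  hence v: "v \<in> carrier_vec n" "v \<noteq> 0\<^sub>v n" "?C *\<^sub>v v = z \<cdot>\<^sub>v v"
    unfolding eigenvector_def using C by auto
  have Cv: "(?C *\<^sub>v v)$i = (\<Sum>j<n. of_real (A$$(i,j)) * v$j)" if "i < n" for i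
    using v(1) A that by (simp add: scalar_prod_def atLeast0LessThan)
  have zv: "(?C *\<^sub>v v)$i = z * v$i" if "i < n" for i
    using v that by simp
  define s where "s = (\<Sum>i<n. cnj (v$i) * (\<Sum>j<n. of_real (A$$(i,j)) * v$j))"
  have "cnj s = (\<Sum>i<n. \<Sum>j<n. v$i * of_real (A$$(i,j)) * cnj (v$j))"
    unfolding s_def by (simp add: sum_distrib_left mult.assoc)
  also have "\<dots> = (\<Sum>j<n. \<Sum>i<n. v$i * of_real (A$$(i,j)) * cnj (v$j))"
    by (rule sum.swap)
  also have "\<dots> = s"
    unfolding s_def sum_distrib_left
    by (intro sum.cong refl) (auto simp: sym mult.commute mult.left_commute)
  finally have cs: "cnj s = s" .
  have "s = (\<Sum>i<n. cnj (v$i) * (z * v$i))"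
    unfolding s_def by (intro sum.cong refl) (simp add: Cv[symmetric] zv)
  also have "\<dots> = z * of_real (\<Sum>i<n. (cmod (v$i))^2)"
    unfolding of_real_sum sum_distrib_left
    by (intro sum.cong refl, subst complex_norm_square) (simp add: ac_simps)
  finally have sz: "s = z * of_real (\<Sum>i<n. (cmod (v$i))^2)" .
  obtain i where i: "i < n" "v$i \<noteq> 0" using v(1,2) by (metis carrier_vecD eq_vecI index_zero_vec(1,2))
  have "(\<Sum>i<n. (cmod (v$i))^2) \<ge> (cmod (v$i))^2"
    using i by (intro member_le_sum) auto
  moreover have "(cmod (v$i))^2 > 0" using i by simp
  ultimately have N: "(\<Sum>i<n. (cmod (v$i))^2) > 0" by linarith
  have "Im s = 0" using arg_cong[OF cs, of Im] by simp
  hence "Im z * (\<Sum>i<n. (cmod (v$i))^2) = 0" using sz by simp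
  thus ?thesis using N by simp
qed

lemma proots_lin_prod: "proots (\<Prod>r\<leftarrow>rs. [:-r, 1:]) = mset (rs :: real list)"
proof (induction rs)
  case Nil then show ?case by simp
next
  case (Cons r rs)
  have nz: "(\<Prod>r\<leftarrow>rs. [:-r, 1:]) \<noteq> (0::real poly)"
    by (auto simp: prod_list_zero_iff)
  have m: "proots ([:-r,1:] * (\<Prod>r\<leftarrow>rs. [:-r, 1:])) = proots [:-r,1:] + proots (\<Prod>r\<leftarrow>rs. [:-r, 1:])"
    using nz by (intro proots_mult) auto
  have e: "(\<Prod>r\<leftarrow>r#rs. [:-r, 1:]) = [:-r,1:] * (\<Prod>r\<leftarrow>rs. [:-r, 1:])" by simp
  show ?case unfolding e m Cons.IH proots_linear_factor by simp
qed

lemma map_poly_of_real_inj: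
  "map_poly (of_real :: real \<Rightarrow> complex) p = map_poly of_real q \<Longrightarrow> p = q"
  by (simp add: poly_eq_iff coeff_map_poly)

lemma sym_real_factor:
  fixes A :: "real mat"
  assumes A: "A \<in> carrier_mat n n" and sym: "\<And>i j. i<n \<Longrightarrow> j<n \<Longrightarrow> A$$(i,j) = A$$(j,i)"
  shows "\<exists>rs. char_poly A = (\<Prod>r\<leftarrow>rs. [:-r, 1:]) \<and> length rs = n"
proof -
  let ?C = "map_mat complex_of_real A"
  have C: "?C \<in> carrier_mat n n" using A by simp
  obtain as where as: "char_poly ?C = (\<Prod>a\<leftarrow>as. [:-a, 1:])" "length as = n"
    using char_poly_factorized[OF C] by auto
  have re: "a = of_real (Re a)" if "a \<in> set as" for a
  proof -
    have "poly (char_poly ?C) a = 0" unfolding as(1) poly_prod_list prod_list_zero_iff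
      using that by auto
    hence "eigenvalue ?C a" using eigenvalue_root_char_poly[OF C] by simp
    hence "Im a = 0" using sym_real_eig[OF A] sym by blast
    thus ?thesis by (simp add: complex_eq_iff)
  qed
  define rs where "rs = map Re as"
  interpret rp: map_poly_comm_ring_hom "of_real :: real \<Rightarrow> complex" ..
  have "map_poly of_real (\<Prod>r\<leftarrow>rs. [:-r, 1:]) = (\<Prod>r\<leftarrow>rs. map_poly (of_real :: real \<Rightarrow> complex) [:-r, 1:])"
    by (simp add: rp.hom_prod_list o_def)
  also have "\<dots> = (\<Prod>a\<leftarrow>as. [:-a, 1:])"
    unfolding rs_def map_map o_def
    by (intro arg_cong[where f = prod_list] map_cong refl) (subst (3) re, auto)
  also have "\<dots> = map_poly of_real (char_poly A)"
    by (metis as(1) of_real_hom.char_poly_hom[OF A])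
  finally have "char_poly A = (\<Prod>r\<leftarrow>rs. [:-r, 1:])"
    by (intro map_poly_of_real_inj) simp
  moreover have "length rs = n" using as(2) by (simp add: rs_def)
  ultimately show ?thesis by blast
qed

definition tr :: "'a::comm_ring_1 mat \<Rightarrow> 'a" where
  "tr M = (\<Sum>i<dim_row M. M$$(i,i))"

lemma mult_entry: "X \<in> carrier_mat n m \<Longrightarrow> Y \<in> carrier_mat m k \<Longrightarrow> i < n \<Longrightarrow> j < k \<Longrightarrow>
  (X * Y)$$(i,j) = (\<Sum>l<m. X$$(i,l) * Y$$(l,j))"
  by (auto simp: scalar_prod_def atLeast0LessThan intro: sum.cong)

lemma tr_comm:
  fixes X Y :: "'a::comm_ring_1 mat"
  assumes X: "X \<in> carrier_mat n m" and Y: "Y \<in> carrier_mat m n"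
  shows "tr (X * Y) = tr (Y * X)"
proof -
  have "tr (X * Y) = (\<Sum>i<n. (X*Y)$$(i,i))" unfolding tr_def using X by simp
  also have "\<dots> = (\<Sum>i<n. \<Sum>l<m. X$$(i,l) * Y$$(l,i))"
    by (intro sum.cong refl, rule mult_entry[OF X Y]) auto
  also have "\<dots> = (\<Sum>l<m. \<Sum>i<n. Y$$(l,i) * X$$(i,l))"
    by (subst sum.swap) (simp add: mult.commute)
  also have "\<dots> = (\<Sum>i<m. (Y*X)$$(i,i))"
    by (intro sum.cong refl, rule mult_entry[OF Y X, symmetric]) auto
  also have "\<dots> = tr (Y * X)" unfolding tr_def using Y by simp
  finally show ?thesis .
qed

lemma ut_mult:
  fixes B C :: "'a::comm_ring_1 mat"
  assumes B: "B \<in> carrier_mat n n" and C: "C \<in> carrier_mat n n"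
    and uB: "upper_triangular B" and uC: "upper_triangular C"
  shows "upper_triangular (B * C)" "\<And>i. i < n \<Longrightarrow> (B * C)$$(i,i) = B$$(i,i) * C$$(i,i)"
proof -
  have zB: "B$$(i,l) = 0" if "l < i" "i < n" for i l using uB B that by auto
  have zC: "C$$(l,j) = 0" if "j < l" "l < n" for j l using uC C that by auto
  show "upper_triangular (B * C)"
  proof (rule upper_triangularI)
    fix i j assume ij: "j < i" "i < dim_row (B * C)"
    hence i: "i < n" using B by simp
    have "(B * C)$$(i,j) = (\<Sum>l<n. B$$(i,l) * C$$(l,j))"
      using B C ij i by (intro mult_entry[OF B C]) auto
    also have "\<dots> = 0"
    proof (rule sum.neutral, intro ballI)
      fix l assume l: "l \<in> {..<n}"
      show "B$$(i,l) * C$$(l,j) = 0"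
      proof (cases "l < i")
        case True thus ?thesis using zB i by simp
      next
        case False thus ?thesis using zC ij l by simp
      qed
    qed
    finally show "(B * C)$$(i,j) = 0" .
  qed
  fix i assume i: "i < n"
  have "(B * C)$$(i,i) = (\<Sum>l<n. B$$(i,l) * C$$(l,i))"
    using B C i by (intro mult_entry[OF B C]) auto
  also have "\<dots> = (\<Sum>l\<in>{i}. B$$(i,l) * C$$(l,i))"
  proof (rule sum.mono_neutral_right, simp, use i in simp, intro ballI)
    fix l assume "l \<in> {..<n} - {i}"
    hence l: "l \<in> {..<n}" "l \<noteq> i" by auto
    show "B$$(i,l) * C$$(l,i) = 0"
    proof (cases "l < i")
      case True thus ?thesis using zB i by simp
    next
      case False thus ?thesis using zC l by simp
    qed
  qed
  finally show "(B * C)$$(i,i) = B$$(i,i) * C$$(i,i)" by simp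
qed

lemma ut_pow:
  fixes B :: "'a::comm_ring_1 mat"
  assumes B: "B \<in> carrier_mat n n" and uB: "upper_triangular B"
  shows "upper_triangular (B ^\<^sub>m k) \<and> (\<forall>i<n. (B ^\<^sub>m k)$$(i,i) = B$$(i,i) ^ k)"
proof (induction k)
  case 0
  then show ?case using B by auto
next
  case (Suc k)
  have P: "B ^\<^sub>m k \<in> carrier_mat n n" using B by simp
  show ?case using ut_mult[OF P B] Suc uB by (simp add: mult.commute)
qed

lemma trace_pow:
  fixes A :: "real mat"
  assumes A: "A \<in> carrier_mat n n" and cp: "char_poly A = (\<Prod>r\<leftarrow>rs. [:-r, 1:])"
  shows "tr (A ^\<^sub>m k) = (\<Sum>r\<leftarrow>rs. r ^ k)"
proof -
  obtain B P Q where sd: "schur_decomposition A rs = (B, P, Q)" by (cases "schur_decomposition A rs") auto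
  from schur_decomposition[OF A cp sd]
  have sw: "similar_mat_wit A B P Q" and uB: "upper_triangular B" and dg: "diag_mat B = rs" by auto
  from similar_mat_witD2[OF A sw] have QP: "Q * P = 1\<^sub>m n"
    and Bc: "B \<in> carrier_mat n n" and Pc: "P \<in> carrier_mat n n" and Qc: "Q \<in> carrier_mat n n" by auto
  have Bk: "B ^\<^sub>m k \<in> carrier_mat n n" using Bc by simp
  have "A ^\<^sub>m k = P * B ^\<^sub>m k * Q" by (rule similar_mat_wit_pow_id[OF sw])
  hence "tr (A ^\<^sub>m k) = tr (Q * (P * B ^\<^sub>m k))"
    using tr_comm[of "P * B ^\<^sub>m k" n n Q] Pc Bk Qc by simp
  also have "Q * (P * B ^\<^sub>m k) = (Q * P) * B ^\<^sub>m k"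
    using Pc Bk Qc by (simp add: assoc_mult_mat)
  also have "\<dots> = B ^\<^sub>m k" unfolding QP by (rule left_mult_one_mat[OF Bk])
  finally have t: "tr (A ^\<^sub>m k) = tr (B ^\<^sub>m k)" .
  have len: "length rs = n" using dg Bc by (auto simp: diag_mat_def)
  have nth: "rs ! i = B$$(i,i)" if "i < n" for i using dg Bc that by (auto simp: diag_mat_def)
  have "tr (B ^\<^sub>m k) = (\<Sum>i<n. B$$(i,i) ^ k)"
    unfolding tr_def using ut_pow[OF Bc uB, of k] Bc by simp
  also have "\<dots> = (\<Sum>i<n. (rs ! i) ^ k)" using nth by simp
  also have "\<dots> = (\<Sum>r\<leftarrow>rs. r ^ k)"
    using len by (simp add: sum_list_sum_nth atLeast0LessThan)
  finally show ?thesis using t by simp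
qed



lemma edges_lower:
  assumes n: "n \<ge> 2" and sg: "simple_graph n E" and cg: "connected_graph n E"
  shows "2 * (n - 1) \<le> card (graph_edges n E)"
proof -
  define R where "R = graph_edges n E"
  have fin: "finite R" unfolding R_def graph_edges_def
    by (rule finite_subset[of _ "{..<n} \<times> {..<n}"]) auto
  have reach: "\<exists>k. (0, v) \<in> R ^^ k" if "v < n" for v
    using cg n that unfolding connected_graph_def R_def by (metis rtrancl_power less_le_trans zero_less_numeral)
  define d where "d v = (LEAST k. (0, v) \<in> R ^^ k)" for v
  have dR: "(0, v) \<in> R ^^ d v" if "v < n" for v
    unfolding d_def using reach[OF that] by (rule LeastI_ex)
  have dmin: "d v \<le> k" if "(0, v) \<in> R ^^ k" for v k
    unfolding d_def using that by (rule Least_le)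
  have par_ex: "\<exists>u. (u, v) \<in> R \<and> d u < d v" if "0 < v" "v < n" for v
  proof (cases "d v")
    case 0
    with dR[OF that(2)] have "v = 0" by simp
    with that show ?thesis by simp
  next
    case (Suc k)
    with dR[OF that(2)] have "(0, v) \<in> R ^^ k O R" by simp
    then obtain u where u: "(0, u) \<in> R ^^ k" "(u, v) \<in> R" by blast
    have "d u \<le> k" using dmin[OF u(1)] .
    thus ?thesis using u(2) Suc by (intro exI[of _ u]) auto
  qed
  define p where "p v = (SOME u. (u, v) \<in> R \<and> d u < d v)" for v
  have pv: "(p v, v) \<in> R \<and> d (p v) < d v" if "0 < v" "v < n" for v
    unfolding p_def using par_ex[OF that] by (rule someI_ex)
  have symR: "(v, u) \<in> R" if "(u, v) \<in> R" for u v
    using that sg unfolding R_def graph_edges_def simple_graph_def by auto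
  define V where "V = {1..<n}"
  define f where "f v = (p v, v)" for v
  define g where "g v = (v, p v)" for v
  have fR: "f ` V \<subseteq> R" unfolding f_def V_def using pv by auto
  have gR: "g ` V \<subseteq> R" unfolding g_def V_def using pv symR by auto
  have fi: "inj_on f V" unfolding f_def by (auto intro: inj_onI)
  have gi: "inj_on g V" unfolding g_def by (auto intro: inj_onI)
  have disj: "f ` V \<inter> g ` V = {}"
  proof (rule ccontr)
    assume "f ` V \<inter> g ` V \<noteq> {}"
    then obtain v w where vw: "v \<in> V" "w \<in> V" "f v = g w" by blast
    hence e: "p v = w" "v = p w" unfolding f_def g_def by auto
    have "d (p v) < d v" using pv vw(1) unfolding V_def by auto
    moreover have "d (p w) < d w" using pv vw(2) unfolding V_def by auto
    ultimately show False using e by simp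
  qed
  have "card (f ` V \<union> g ` V) = card (f ` V) + card (g ` V)"
    by (rule card_Un_disjoint) (use disj in \<open>auto simp: V_def\<close>)
  also have "\<dots> = 2 * (n - 1)" using card_image[OF fi] card_image[OF gi] by (simp add: V_def)
  finally have "card (f ` V \<union> g ` V) = 2 * (n - 1)" .
  moreover have "card (f ` V \<union> g ` V) \<le> card R" using fR gR fin by (intro card_mono) auto
  ultimately show ?thesis unfolding R_def by simp
qed

lemma adj_facts:
  assumes sg: "simple_graph n E"
  defines "A \<equiv> adjacency_matrix n E"
  shows "A \<in> carrier_mat n n"
    "\<And>i j. i < n \<Longrightarrow> j < n \<Longrightarrow> A$$(i,j) = A$$(j,i)"
    "tr (A ^\<^sub>m 1) = 0"
    "tr (A ^\<^sub>m 2) = real (card (graph_edges n E))"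
    "tr (A ^\<^sub>m 3) \<ge> 0"
proof -
  show Ac: "A \<in> carrier_mat n n" unfolding A_def adjacency_matrix_def by simp
  have ent: "A$$(i,j) = (if E i j then 1 else 0)" if "i < n" "j < n" for i j
    using that unfolding A_def adjacency_matrix_def by simp
  have se: "\<And>i j. i < n \<Longrightarrow> j < n \<Longrightarrow> E i j = E j i"
    using sg unfolding simple_graph_def by blast
  show sym: "\<And>i j. i < n \<Longrightarrow> j < n \<Longrightarrow> A$$(i,j) = A$$(j,i)"
    by (simp add: ent se)
  have p1: "A ^\<^sub>m 1 = A" using Ac by simp
  show "tr (A ^\<^sub>m 1) = 0" unfolding p1 tr_def using Ac sg
    by (auto simp: ent simple_graph_def intro!: sum.neutral)
  have p2: "A ^\<^sub>m 2 = A * A" using Ac by (simp add: numeral_2_eq_2)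
  have "tr (A ^\<^sub>m 2) = (\<Sum>i<n. (A * A)$$(i,i))" unfolding p2 tr_def using Ac by simp
  also have "\<dots> = (\<Sum>i<n. \<Sum>l<n. A$$(i,l) * A$$(l,i))"
    by (intro sum.cong refl, rule mult_entry[OF Ac Ac]) auto
  also have "\<dots> = (\<Sum>i<n. \<Sum>l<n. if E i l then 1 else 0)"
    by (intro sum.cong refl) (auto simp: ent se)
  also have "\<dots> = (\<Sum>x\<in>{..<n} \<times> {..<n}. if E (fst x) (snd x) then 1 else 0)"
    by (simp add: sum.cartesian_product case_prod_beta)
  also have "\<dots> = (\<Sum>x\<in>{x\<in>{..<n} \<times> {..<n}. E (fst x) (snd x)}. 1)"
    by (rule sum.inter_filter[symmetric]) simp
  also have "{x\<in>{..<n} \<times> {..<n}. E (fst x) (snd x)} = graph_edges n E"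
    unfolding graph_edges_def by auto
  finally show "tr (A ^\<^sub>m 2) = real (card (graph_edges n E))" by simp
  have nn: "\<forall>i<n. \<forall>j<n. (A ^\<^sub>m k)$$(i,j) \<ge> 0" for k
  proof (induction k)
    case 0 then show ?case using Ac by auto
  next
    case (Suc k)
    have Pk: "A ^\<^sub>m k \<in> carrier_mat n n" using Ac by simp
    show ?case
    proof (intro allI impI)
      fix i j assume ij: "i < n" "j < n"
      have "(A ^\<^sub>m Suc k)$$(i,j) = (\<Sum>l<n. (A ^\<^sub>m k)$$(i,l) * A$$(l,j))"
        using mult_entry[OF Pk Ac ij] by simp
      also have "\<dots> \<ge> 0" using Suc ij by (intro sum_nonneg mult_nonneg_nonneg) (auto simp: ent)
      finally show "(A ^\<^sub>m Suc k)$$(i,j) \<ge> 0" .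
    qed
  qed
  show "tr (A ^\<^sub>m 3) \<ge> 0" unfolding tr_def using nn[of 3] Ac by (auto intro!: sum_nonneg)
qed

lemma sum_taylor3: "(\<Sum>r\<leftarrow>rs. 1 + r + r^2/2 + r^3/6) =
  real (length rs) + (\<Sum>r\<leftarrow>rs. r^1) + (\<Sum>r\<leftarrow>rs. r^2)/2 + (\<Sum>r\<leftarrow>rs. r^3)/6"
  by (induction rs) (simp_all add: field_simps)

theorem mainTheorem7:
  fixes n :: nat and E :: "nat \<Rightarrow> nat \<Rightarrow> bool"
  assumes "n \<ge> 2" and "simple_graph n E" and "connected_graph n E"
  shows "estrada_index n E >
    exp (2 * cos (pi / (real n + 1))) + (real n - 1) - 2 * cos (pi / (real n + 1))"
proof -
  define A where "A = adjacency_matrix n E"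
  note af = adj_facts[OF assms(2), folded A_def]
  obtain rs where rs: "char_poly A = (\<Prod>r\<leftarrow>rs. [:-r, 1:])" "length rs = n"
    using sym_real_factor[OF af(1) af(2)] by blast
  have tp: "tr (A ^\<^sub>m k) = (\<Sum>r\<leftarrow>rs. r ^ k)" for k by (rule trace_pow[OF af(1) rs(1)])
  have "estrada_index n E = (\<Sum>r\<leftarrow>rs. exp r)"
    unfolding estrada_index_def eigenvalues_mset_def A_def[symmetric] rs(1) proots_lin_prod
    by (simp add: sum_mset_sum_list flip: mset_map)
  also have "\<dots> \<ge> (\<Sum>r\<leftarrow>rs. 1 + r + r^2/2 + r^3/6)"
    by (intro sum_list_mono exp_taylor3)
  finally have "estrada_index n E \<ge> real n + tr (A ^\<^sub>m 1) + tr (A ^\<^sub>m 2) / 2 + tr (A ^\<^sub>m 3) / 6"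
    unfolding sum_taylor3 tp rs(2) .
  moreover have "2 * real n - 2 \<le> real (card (graph_edges n E))"
  proof -
    have h: "real (2 * (n - 1)) \<le> real (card (graph_edges n E))"
      using edges_lower[OF assms] by (simp only: of_nat_le_iff)
    have "real (2 * (n - 1)) = 2 * real n - 2" using assms(1) by (subst of_nat_mult, subst of_nat_diff) auto
    with h show ?thesis by simp
  qed
  ultimately have "estrada_index n E \<ge> 2 * real n - 1" using af(3-5) by linarith
  moreover have "exp (2 * cos (pi / (real n + 1))) - 2 * cos (pi / (real n + 1)) < real n"
    by (rule num_bound[OF assms(1)])
  ultimately show ?thesis by linarith
qed

end
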